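(* Let $n\geq 1$, let $c^S<\sup_{f\in\mathcal{P}}q(f)$ and $c^D\geq 0$, and let $\Gamma_1\subseteq\mathcal{P}^n$ be the fixed-window IPT acceptance region for $\mathbf{H}_1$ with parameters $(c^S,c^D)$ (defined in the context). Then $$P_\infty\left(\hat f_{X_1^n}\in\Gamma_1\right)\leq (n+1)^m\exp\left(-n\left(c^D+\frac{\left(\left(c^S-q_0\right)^+\right)^2}{2L^2}\right)\right).$$
   Context: Setup. Let $\mathcal{A}=\{a_1,\dots,a_m\}$ be a finite alphabet and $\mathcal{P}$ the set of probability mass functions (p.m.f.s) on $\mathcal{A}$, with the $\ell_1$ norm $\|f-f'\|_1=\sum_a|f(a)-f'(a)|$. $I(f\|f')=\sum_{a}f(a)\log\frac{f(a)}{f'(a)}$ is the Kullback–Leibler divergence (natural logarithm, $0\log 0=0$). A known pre-change p.m.f. $f_0\in\mathcal{P}$ is fixed. $q:\mathcal{P}\to\mathbb{R}$ is quasiconcave and $L$-Lipschitz with respect to $\ell_1$ (i.e. $|q(f)-q(f')|\leq L\|f-f'\|_1$), with $q_0:=q(f_0)<0<\underline{q}$, and the set of possible post-change p.m.f.s $\mathcal{P}_1$ is a nonempty subset of $\{f: q(f)\geq\underline{q}\}$. Observations $X_1,X_2,\dots$ take values in $\mathcal{A}$; under $P_{f_1,t_1}$ ($f_1\in\mathcal{P}_1$, $t_1\geq 1$) the variables $X_1,\dots,X_{t_1-1}$ are i.i.d. $f_0$ and $X_{t_1},X_{t_1+1},\dots$ are i.i.d. $f_1$, independent of the former; $P_\infty$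 denotes the law under which all $X_k$ are i.i.d. $f_0$. For $i\leq j$, $\hat f_{X_i^j}(a)=\frac{1}{j-i+1}\#\{i\leq k\leq j: X_k=a\}$ is the empirical p.m.f., and $\mathcal{P}^n$ is the (finite) set of p.m.f.s realizable as empirical p.m.f.s of $n$ letters of $\mathcal{A}$. $(x)^+=\max\{x,0\}$. Fixed-window IPT. Given $c=(c^S,c^D)$ with $c^D\geq0$ and $c^S<\sup_f q(f)$, let $f^*=\arg\min_{f\in\mathcal{P}:\,q(f)\geq c^S}I(f\|f_0)$ be the I-projection of $f_0$ onto the closed convex set $\{q\geq c^S\}$. For sample size $n$, set $\Gamma_1=\{f\in\mathcal{P}^n: q(f)\geq c^S\text{ and } I(f\|f^* )\geq c^D\}$ and $\Gamma_0=\mathcal{P}^n\setminus\Gamma_1$; the test declares $\mathbf{H}_1$ (change/alternative) iff $\hat f_{X_1^n}\in\Gamma_1$. *)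

theory Defs
  imports "HOL-Probability.Probability"
begin

definition PMFs :: "('a::finite \<Rightarrow> real) set" where
  "PMFs = {f. (\<forall>a. 0 \<le> f a) \<and> (\<Sum>a\<in>UNIV. f a) = 1}"

definition l1dist :: "('a::finite \<Rightarrow> real) \<Rightarrow> ('a \<Rightarrow> real) \<Rightarrow> real" where
  "l1dist f g = (\<Sum>a\<in>UNIV. \<bar>f a - g a\<bar>)"

definition KL :: "('a::finite \<Rightarrow> real) \<Rightarrow> ('a \<Rightarrow> real) \<Rightarrow> ereal" where
  "KL f g = (\<Sum>a\<in>UNIV. if f a = 0 then 0
                        else if g a = 0 then \<infinity>
                        else ereal (f a * ln (f a / g a)))"

definition quasiconcave_on :: "('a \<Rightarrow> real) set \<Rightarrow> (('a \<Rightarrow> real) \<Rightarrow> real) \<Rightarrow> bool" where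
  "quasiconcave_on S q \<longleftrightarrow>
     (\<forall>f\<in>S. \<forall>g\<in>S. \<forall>t::real. 0 \<le> t \<and> t \<le> 1 \<longrightarrow>
        min (q f) (q g) \<le> q (\<lambda>a. t * f a + (1 - t) * g a))"

text \<open>Empirical p.m.f. of X_1^n, where X_1,...,X_n are the values x 0, ..., x (n-1).\<close>
definition empirical :: "(nat \<Rightarrow> 'a) \<Rightarrow> nat \<Rightarrow> 'a \<Rightarrow> real" where
  "empirical x n a = real (card {k. k < n \<and> x k = a}) / real n"

definition emp_types :: "nat \<Rightarrow> ('a \<Rightarrow> real) set" where
  "emp_types n = {f. \<exists>x. f = empirical x n}"

definition is_IProj ::
  "(('a::finite \<Rightarrow> real) \<Rightarrow> real) \<Rightarrow> real \<Rightarrow> ('a \<Rightarrow> real) \<Rightarrow> ('a \<Rightarrow> real) \<Rightarrow> bool" where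
  "is_IProj q cS f0 fs \<longleftrightarrow> fs \<in> PMFs \<and> cS \<le> q fs \<and>
     (\<forall>f\<in>PMFs. cS \<le> q f \<longrightarrow> KL fs f0 \<le> KL f f0)"

definition Gamma1 ::
  "(('a::finite \<Rightarrow> real) \<Rightarrow> real) \<Rightarrow> real \<Rightarrow> real \<Rightarrow> ('a \<Rightarrow> real) \<Rightarrow> nat \<Rightarrow> ('a \<Rightarrow> real) set" where
  "Gamma1 q cS cD fs n = {f \<in> emp_types n. cS \<le> q f \<and> ereal cD \<le> KL f fs}"

end

theory Submission imports Defs begin


lemma ln_lower:
  fixes u :: real assumes u: "0 < u"
  shows "(u-1)*(5*u+1) / (2*u*(u+2)) \<le> ln u"
proof -
  define F where "F = (\<lambda>u::real. ln u - (5*u^2-4*u-1) / (2*u^2+4*u))"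
  have D: "DERIV F x :> (x-1)^3/(x^2*(x+2)^2)" if "0 < x" for x
  proof -
    have "2*x^2+4*x > 0" using that by (simp add: add_pos_pos)
    hence h: "2*x^2+4*x \<noteq> 0" "x+2 \<noteq> 0" "x \<noteq> 0" using that by auto
    have e: "1/x - ((10*x-4)*(2*x^2+4*x) - (5*x^2-4*x-1)*(4*x+4)) / (2*x^2+4*x)^2
        = (x-1)^3/(x^2*(x+2)^2)"
    proof -
      have "(2*x^2+4*x)^2 = 4*(x^2*(x+2)^2)" by (simp add: algebra_simps power2_eq_square)
      thus ?thesis using h by (simp add: divide_simps) (simp add: algebra_simps power2_eq_square power3_eq_cube)
    qed
    have "DERIV F x :> 1/x - ((10*x-4)*(2*x^2+4*x) - (5*x^2-4*x-1)*(4*x+4)) / (2*x^2+4*x)^2"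
      unfolding F_def using that h
      apply (auto intro!: derivative_eq_intros)
      apply (simp add: divide_simps power2_eq_square)
      done
    moreover note e
    ultimately show ?thesis by simp
  qed
  have cont: "continuous_on {a..b} F" if "0 < a" for a b
  proof -
    have "\<forall>x\<in>{a..b}. isCont F x"
      using D that by (meson DERIV_isCont atLeastAtMost_iff less_le_trans)
    thus ?thesis by (simp add: continuous_at_imp_continuous_on)
  qed
  have F1: "F 1 = 0" by (simp add: F_def)
  have "F u \<ge> 0"
  proof (cases "u \<le> 1")
    case True
    have "F u \<ge> F 1"
    proof (rule DERIV_nonpos_imp_decreasing_open[OF True])
      fix x assume "u < x" "x < 1"
      hence "(x-1)^3/(x^2*(x+2)^2) \<le> 0" using u
      proof -
        have "(x-1)^3 = (x-1)*(x-1)^2" by (simp add: power3_eq_cube power2_eq_square)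
        also have "\<dots> \<le> 0" using \<open>x<1\<close> by (intro mult_nonpos_nonneg) auto
        finally show ?thesis by (intro divide_nonpos_nonneg) auto
      qed
      thus "\<exists>y. DERIV F x :> y \<and> y \<le> 0" using D[of x] \<open>u<x\<close> u by auto
    qed (rule cont[OF u])
    thus ?thesis using F1 by simp
  next
    case False
    have "F 1 \<le> F u"
    proof (rule DERIV_nonneg_imp_increasing_open[of 1 u])
      fix x assume "1 < x" "x < u"
      hence "(x-1)^3/(x^2*(x+2)^2) \<ge> 0" by simp
      thus "\<exists>y. DERIV F x :> y \<and> y \<ge> 0" using D[of x] \<open>1<x\<close> by auto
    qed (use False cont in auto)
    thus ?thesis using F1 by simp
  qed
  moreover have "(u-1)*(5*u+1) / (2*u*(u+2)) = (5*u^2-4*u-1) / (2*u^2+4*u)"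
    by (simp add: algebra_simps power2_eq_square)
  ultimately show ?thesis by (simp add: F_def)
qed

lemma pointwise_pinsker:
  fixes x y :: real assumes x: "0 \<le> x" and y: "0 < y"
  shows "3*(x-y)^2/(2*(x+2*y)) \<le> x*ln(x/y) - x + y"
proof (cases "x = 0")
  case True
  have "3*(x-y)^2/(2*(x+2*y)) = 3*y/4" using True y by (simp add: power2_eq_square)
  thus ?thesis using True y by simp
next
  case False
  hence xp: "0 < x" using x by simp
  define u where "u = x/y"
  have u: "0 < u" using xp y by (simp add: u_def)
  have "(u-1)*(5*u+1) / (2*u*(u+2)) \<le> ln u" by (rule ln_lower[OF u])
  hence "x*((u-1)*(5*u+1) / (2*u*(u+2))) \<le> x * ln u" by (rule mult_left_mono) (use xp in auto)
  moreover have "x*((u-1)*(5*u+1) / (2*u*(u+2))) = 3*(x-y)^2/(2*(x+2*y)) + x - y"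
  proof -
    have xu: "x = u*y" using y by (simp add: u_def)
    have "u*y + 2*y > 0" using u y by (simp add: add_pos_pos)
    hence "u*y + 2*y \<noteq> 0" by simp
    thus ?thesis unfolding xu using u y
      by (simp add: divide_simps power2_eq_square) (simp add: algebra_simps)
  qed
  ultimately show ?thesis by (simp add: u_def)
qed

definition KLr :: "('a::finite \<Rightarrow> real) \<Rightarrow> ('a \<Rightarrow> real) \<Rightarrow> real" where
  "KLr f g = (\<Sum>a\<in>UNIV. f a * ln (f a / g a))"

lemma pinsker:
  fixes f g :: "'a::finite \<Rightarrow> real"
  assumes f: "f \<in> PMFs" and g: "g \<in> PMFs" and supp: "\<And>a. g a = 0 \<Longrightarrow> f a = 0"
  shows "(l1dist f g)^2 \<le> 2 * KLr f g"
proof -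
  have f0: "\<And>a. 0 \<le> f a" and f1: "(\<Sum>a\<in>UNIV. f a) = 1" using f by (auto simp: PMFs_def)
  have g0: "\<And>a. 0 \<le> g a" and g1: "(\<Sum>a\<in>UNIV. g a) = 1" using g by (auto simp: PMFs_def)
  define w where "w a = f a + 2 * g a" for a
  define A where "A i = (if g i > 0 then \<bar>f i - g i\<bar> / sqrt (w i) else 0)" for i
  define B where "B i = sqrt (w i)" for i
  have w0: "0 \<le> w i" for i using f0 g0 by (simp add: w_def)
  have AB: "A i * B i = \<bar>f i - g i\<bar>" for i
  proof (cases "g i > 0")
    case True
    hence "w i > 0" using f0[of i] by (simp add: w_def)
    thus ?thesis using True by (simp add: A_def B_def)
  next
    case False
    hence "g i = 0" using g0[of i] by simp
    thus ?thesis using supp[of i] by (simp add: A_def B_def)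
  qed
  have B2: "(\<Sum>i\<in>UNIV. (B i)^2) = 3"
    using w0 f1 g1 by (simp add: B_def w_def sum.distrib sum_distrib_left[symmetric])
  have pt: "3/2 * (A i)^2 \<le> f i * ln (f i / g i) - f i + g i" for i
  proof (cases "g i > 0")
    case True
    hence "w i > 0" using f0[of i] by (simp add: w_def)
    hence "3/2 * (A i)^2 = 3*(f i - g i)^2/(2*(f i + 2 * g i))" using True
      by (simp add: A_def power_divide w_def)
    thus ?thesis using pointwise_pinsker[OF f0[of i] True] by linarith
  next
    case False
    hence "g i = 0" using g0[of i] by simp
    thus ?thesis using supp[of i] by (simp add: A_def)
  qed
  have "(l1dist f g)^2 = (\<Sum>i\<in>UNIV. A i * B i)^2" by (simp add: l1dist_def AB)
  also have "\<dots> \<le> (\<Sum>i\<in>UNIV. (A i)^2) * (\<Sum>i\<in>UNIV. (B i)^2)" by (rule Cauchy_Schwarz_ineq_sum)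
  also have "\<dots> = 2 * (\<Sum>i\<in>UNIV. 3/2 * (A i)^2)" using B2 by (simp add: sum_divide_distrib[symmetric] sum_distrib_left[symmetric])
  also have "\<dots> \<le> 2 * (\<Sum>i\<in>UNIV. f i * ln (f i / g i) - f i + g i)"
    by (intro mult_left_mono sum_mono pt) auto
  also have "\<dots> = 2 * KLr f g" using f1 g1 by (simp add: KLr_def sum.distrib sum_subtractf)
  finally show ?thesis .
qed



lemma KL_fin:
  assumes "\<And>a. g a = 0 \<Longrightarrow> f a = 0"
  shows "KL f g = ereal (KLr f g)"
proof -
  have "KL f g = (\<Sum>a\<in>UNIV. ereal (f a * ln (f a / g a)))"
    unfolding KL_def using assms by (intro sum.cong) auto
  thus ?thesis by (simp add: KLr_def)
qed

lemma KL_inf: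
  fixes f g :: "'a::finite \<Rightarrow> real"
  assumes "g a = 0" "f a \<noteq> 0"
  shows "KL f g = \<infinity>"
  unfolding KL_def using assms by (subst sum_Pinfty) auto

lemma atom_bound:
  fixes s p h d :: real
  assumes s: "0 < s" and p: "0 < p" and h: "0 \<le> h" and hd: "h = s + d"
  shows "h * ln (h/p) \<le> s * ln (s/p) + d * ln (s/p) + d + d^2/s"
proof (cases "h = 0")
  case True
  hence "d = -s" using hd by simp
  thus ?thesis using True s by (simp add: power2_eq_square)
next
  case False
  hence hp: "0 < h" using h by simp
  have "ln (h/p) = ln (h/s) + ln (s/p)" using hp s p by (simp add: ln_div)
  moreover have "ln (h/s) \<le> h/s - 1" using hp s by (intro ln_le_minus_one) auto
  hence "h * ln (h/s) \<le> h * (h/s - 1)" using hp by (intro mult_left_mono) auto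
  moreover have "h * (h/s - 1) = d + d^2/s" using s unfolding hd
    by (simp add: field_simps power2_eq_square)
  ultimately show ?thesis unfolding hd[symmetric] using hd by (simp add: algebra_simps)
qed

lemma pythag:
  fixes p0 fs g :: "'a::finite \<Rightarrow> real"
  assumes p0: "p0 \<in> PMFs" and fsP: "fs \<in> PMFs" and gP: "g \<in> PMFs"
    and sg: "\<And>a. p0 a = 0 \<Longrightarrow> g a = 0"
    and sfs: "\<And>a. p0 a = 0 \<Longrightarrow> fs a = 0"
    and mini: "\<And>t. 0 < t \<Longrightarrow> t \<le> 1 \<Longrightarrow> KLr fs p0 \<le> KLr (\<lambda>a. (1-t)*fs a + t*g a) p0"
  shows "(\<forall>a. fs a = 0 \<longrightarrow> g a = 0) \<and> KLr fs p0 + KLr g fs \<le> KLr g p0"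
proof -
  have p00: "\<And>a. 0 \<le> p0 a" using p0 by (auto simp: PMFs_def)
  have fs0: "\<And>a. 0 \<le> fs a" and fs1: "(\<Sum>a\<in>UNIV. fs a) = 1" using fsP by (auto simp: PMFs_def)
  have g0: "\<And>a. 0 \<le> g a" and g1: "(\<Sum>a\<in>UNIV. g a) = 1" using gP by (auto simp: PMFs_def)
  define dA where "dA a = (if fs a > 0 then (g a - fs a)*ln(fs a/p0 a) else 0)" for a
  define kA where "kA a = (if fs a > 0 then (g a - fs a)^2/fs a else 0)" for a
  define gB where "gB a = (if fs a > 0 then 0 else g a)" for a
  define cA where "cA a = (if fs a > 0 then 0 else g a * ln(g a/p0 a))" for a
  define eA where "eA a = (if fs a > 0 then g a - fs a else 0)" for a
  define Q where "Q = (\<Sum>a\<in>UNIV. dA a) - (\<Sum>a\<in>UNIV. gB a) + (\<Sum>a\<in>UNIV. cA a)"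
  define K where "K = (\<Sum>a\<in>UNIV. kA a)"
  define G where "G = (\<Sum>a\<in>UNIV. gB a)"
  have K0: "0 \<le> K" unfolding K_def kA_def by (intro sum_nonneg) auto
  have G0: "0 \<le> G" unfolding G_def gB_def using g0 by (intro sum_nonneg) auto
  have eAgB: "(\<Sum>a\<in>UNIV. eA a) = - G"
  proof -
    have "(\<Sum>a\<in>UNIV. eA a) + G = (\<Sum>a\<in>UNIV. g a - fs a)"
      unfolding G_def sum.distrib[symmetric]
    proof (intro sum.cong refl)
      fix a show "eA a + gB a = g a - fs a"
        using fs0[of a] by (cases "fs a > 0") (auto simp: eA_def gB_def)
    qed
    thus ?thesis using g1 fs1 by (simp add: sum_subtractf)
  qed
  have KLfs: "KLr fs p0 = (\<Sum>a\<in>UNIV. if fs a > 0 then fs a * ln (fs a / p0 a) else 0)"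
    unfolding KLr_def
  proof (intro sum.cong refl)
    fix a show "fs a * ln (fs a / p0 a) = (if fs a > 0 then fs a * ln (fs a / p0 a) else 0)"
      using fs0[of a] by (cases "fs a > 0") auto
  qed
  have key: "0 \<le> Q + t*K + G * ln t" if t: "0 < t" "t \<le> 1" for t
  proof -
    define h where "h a = (1-t)*fs a + t*g a" for a
    have pt: "h a * ln (h a / p0 a) \<le> (if fs a > 0 then fs a * ln (fs a / p0 a) else 0)
        + t * (dA a + eA a) + t^2 * kA a + t * ln t * gB a + t * cA a" for a
    proof (cases "fs a > 0")
      case True
      have pp: "0 < p0 a" using sfs[of a] True p00[of a] by (auto simp: less_le)
      have "h a \<ge> 0" using t fs0[of a] g0[of a] by (simp add: h_def)
      from atom_bound[OF True pp this, of "t*(g a - fs a)"]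
      have "h a * ln (h a / p0 a) \<le> fs a * ln (fs a / p0 a) + t*(g a - fs a) * ln (fs a / p0 a)
          + t*(g a - fs a) + (t*(g a - fs a))^2 / fs a"
        by (simp add: h_def algebra_simps)
      moreover have "(t*(g a - fs a))^2 = t^2 * (g a - fs a)^2" by (simp add: power_mult_distrib)
      ultimately show ?thesis using True by (simp add: dA_def eA_def kA_def gB_def cA_def power_mult_distrib algebra_simps)
    next
      case False
      hence fz: "fs a = 0" using fs0[of a] by simp
      show ?thesis
      proof (cases "g a = 0")
        case True
        thus ?thesis using fz by (simp add: h_def dA_def eA_def kA_def gB_def cA_def)
      next
        case gnz: False
        hence "p0 a \<noteq> 0" using sg by auto
        hence pp: "0 < p0 a" using p00[of a] by simp
        have gp: "0 < g a" using gnz g0[of a] by simp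
        have "ln (t * g a / p0 a) = ln t + ln (g a / p0 a)" using t gp pp by (simp add: ln_mult ln_div)
        thus ?thesis using fz by (simp add: h_def dA_def eA_def kA_def gB_def cA_def algebra_simps)
      qed
    qed
    have "h = (\<lambda>a. (1-t)*fs a + t*g a)" by (rule ext) (simp add: h_def)
    hence "KLr fs p0 \<le> KLr h p0" using mini[OF t] by simp
    also have "\<dots> \<le> (\<Sum>a\<in>UNIV. (if fs a > 0 then fs a * ln (fs a / p0 a) else 0)
        + t * (dA a + eA a) + t^2 * kA a + t * ln t * gB a + t * cA a)"
      unfolding KLr_def by (intro sum_mono pt)
    also have "\<dots> = KLr fs p0 + t * ((\<Sum>a\<in>UNIV. dA a) + (\<Sum>a\<in>UNIV. eA a)) + t^2 * K
        + t * ln t * G + t * (\<Sum>a\<in>UNIV. cA a)"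
      by (simp add: KLfs sum.distrib sum_distrib_left[symmetric] K_def G_def)
    also have "\<dots> = KLr fs p0 + t * (Q + t * K + G * ln t)"
      by (simp add: eAgB Q_def G_def power2_eq_square algebra_simps)
    finally have "0 \<le> t * (Q + t * K + G * ln t)" by simp
    thus ?thesis using t by (simp add: zero_le_mult_iff)
  qed
  have G00: "G = 0"
  proof (rule ccontr)
    assume "G \<noteq> 0"
    hence Gp: "0 < G" using G0 by simp
    define t where "t = exp (-(\<bar>Q\<bar> + K + 1)/G)"
    have tp: "0 < t" by (simp add: t_def)
    have "-(\<bar>Q\<bar> + K + 1)/G \<le> 0" using Gp K0 by (intro divide_nonpos_pos) auto
    hence t1: "t \<le> 1" by (simp add: t_def)
    have "G * ln t = -(\<bar>Q\<bar> + K + 1)" using Gp by (simp add: t_def)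
    moreover have "t * K \<le> K" using mult_left_le_one_le[OF K0 _ t1] tp by simp
    ultimately have "Q + t*K + G * ln t < 0" by linarith
    thus False using key[OF tp t1] by simp
  qed
  have gBz: "gB a = 0" for a
  proof -
    have "\<forall>a\<in>UNIV. gB a = 0" using G00 unfolding G_def
      by (subst sum_nonneg_eq_0_iff[symmetric]) (auto simp: gB_def g0)
    thus ?thesis by simp
  qed
  have supp: "\<forall>a. fs a = 0 \<longrightarrow> g a = 0"
  proof (intro allI impI)
    fix a assume "fs a = 0" thus "g a = 0" using gBz[of a] by (simp add: gB_def)
  qed
  have cz: "(\<Sum>a\<in>UNIV. cA a) = 0" by (intro sum.neutral ballI) (metis cA_def gB_def gBz mult_zero_left)
  have Qge: "0 \<le> Q"
  proof (rule ccontr)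
    assume "\<not> 0 \<le> Q"
    hence Qn: "Q < 0" by simp
    define t where "t = min 1 (-Q/(2*(K+1)))"
    have "0 < -Q/(2*(K+1))" using Qn K0 by (intro divide_pos_pos) auto
    hence tp: "0 < t" by (simp add: t_def)
    have t1: "t \<le> 1" by (simp add: t_def)
    have "t * K \<le> (-Q/(2*(K+1))) * K" using K0 by (intro mult_right_mono) (auto simp: t_def)
    also have "\<dots> < -Q" using Qn K0 mult_nonneg_nonpos[of K Q] by (simp add: field_simps)
    finally have "Q + t * K + G * ln t < 0" using G00 by simp
    thus False using key[OF tp t1] by simp
  qed
  have DA: "0 \<le> (\<Sum>a\<in>UNIV. dA a)" using Qge cz G00 by (simp add: Q_def G_def)
  have "KLr g p0 = (\<Sum>a\<in>UNIV. g a * ln (g a / fs a) + (dA a + (if fs a > 0 then fs a * ln (fs a / p0 a) else 0)))"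
    unfolding KLr_def
  proof (intro sum.cong refl)
    fix a
    show "g a * ln (g a / p0 a) = g a * ln (g a / fs a) + (dA a + (if fs a > 0 then fs a * ln (fs a / p0 a) else 0))"
    proof (cases "fs a > 0")
      case True
      have pp: "0 < p0 a" using sfs[of a] True p00[of a] by (auto simp: less_le)
      show ?thesis
      proof (cases "g a = 0")
        case True
        thus ?thesis using \<open>fs a > 0\<close> by (simp add: dA_def algebra_simps)
      next
        case False
        hence gp: "0 < g a" using g0[of a] by simp
        have "ln (g a / p0 a) = ln (g a / fs a) + ln (fs a / p0 a)"
          using gp pp True by (simp add: ln_div)
        thus ?thesis using True by (simp add: dA_def algebra_simps)
      qed
    next
      case False
      hence "fs a = 0" using fs0[of a] by simp
      hence "g a = 0" using supp by simp
      thus ?thesis using False by (simp add: dA_def)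
    qed
  qed
  also have "\<dots> = KLr g fs + (\<Sum>a\<in>UNIV. dA a) + KLr fs p0"
    unfolding KLfs by (simp add: KLr_def sum.distrib)
  finally have "KLr fs p0 + KLr g fs \<le> KLr g p0" using DA by simp
  with supp show ?thesis by simp
qed



lemma Ext_finite: "finite (PiE {..<(n::nat)} (\<lambda>_. UNIV :: 'a::finite set))"
  by (intro finite_PiE) auto

lemma prob_Pi_sum:
  fixes p :: "'a::finite pmf" and n :: nat
  shows "measure_pmf.prob (Pi_pmf {..<n} undefined (\<lambda>_. p)) A
       = (\<Sum>x\<in>A \<inter> PiE {..<n} (\<lambda>_. UNIV). \<Prod>k<n. pmf p (x k))"
proof -
  let ?M = "Pi_pmf {..<n} undefined (\<lambda>_. p)"
  let ?E = "PiE {..<n} (\<lambda>_. UNIV :: 'a set)"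
  have sub: "set_pmf ?M \<subseteq> ?E"
    using set_Pi_pmf_subset[of "{..<n}" undefined "\<lambda>_. p"] by (auto simp: PiE_def extensional_def)
  have "measure_pmf.prob ?M A = measure_pmf.prob ?M (A \<inter> set_pmf ?M)"
    by (simp add: measure_Int_set_pmf)
  also have "A \<inter> set_pmf ?M = (A \<inter> ?E) \<inter> set_pmf ?M" using sub by blast
  also have "measure_pmf.prob ?M \<dots> = measure_pmf.prob ?M (A \<inter> ?E)"
    by (simp add: measure_Int_set_pmf)
  also have "\<dots> = (\<Sum>x\<in>A \<inter> ?E. pmf ?M x)"
    using Ext_finite by (intro measure_measure_pmf_finite) auto
  also have "\<dots> = (\<Sum>x\<in>A \<inter> ?E. \<Prod>k<n. pmf p (x k))"
    by (intro sum.cong refl) (auto simp: pmf_Pi PiE_def extensional_def)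
  finally show ?thesis .
qed

lemma prod_count:
  fixes p :: "'a::finite \<Rightarrow> real" and n :: nat
  shows "(\<Prod>k<n. p (x k)) = (\<Prod>a\<in>UNIV. p a ^ card {k. k < n \<and> x k = a})"
proof (induction n)
  case 0 thus ?case by simp
next
  case (Suc n)
  have c: "card {k. k < Suc n \<and> x k = a} = card {k. k < n \<and> x k = a} + (if x n = a then 1 else 0)" for a
  proof -
    have "{k. k < Suc n \<and> x k = a} = {k. k < n \<and> x k = a} \<union> (if x n = a then {n} else {})"
      by (auto simp: less_Suc_eq)
    thus ?thesis by (auto simp: card_insert_if)
  qed
  have "(\<Prod>a\<in>UNIV. p a ^ card {k. k < Suc n \<and> x k = a})
      = (\<Prod>a\<in>UNIV. p a ^ card {k. k < n \<and> x k = a} * (if x n = a then p a else 1))"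
    by (intro prod.cong refl) (simp add: c power_add)
  also have "\<dots> = (\<Prod>a\<in>UNIV. p a ^ card {k. k < n \<and> x k = a}) * p (x n)"
    by (simp add: prod.distrib prod.If_cases)
  finally show ?case using Suc by simp
qed

lemma sum_count:
  fixes n :: nat
  shows "(\<Sum>a\<in>(UNIV::'a::finite set). card {k. k < n \<and> x k = a}) = n"
proof (induction n)
  case 0 thus ?case by simp
next
  case (Suc n)
  have c: "card {k. k < Suc n \<and> x k = a} = card {k. k < n \<and> x k = a} + (if x n = a then 1 else 0)" for a
  proof -
    have "{k. k < Suc n \<and> x k = a} = {k. k < n \<and> x k = a} \<union> (if x n = a then {n} else {})"
      by (auto simp: less_Suc_eq)
    thus ?thesis by (auto simp: card_insert_if)
  qed
  show ?case using Suc by (simp add: c sum.distrib)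
qed

lemma empirical_PMF:
  assumes "1 \<le> n" shows "empirical x n \<in> PMFs"
proof -
  have "(\<Sum>a\<in>UNIV. real (card {k. k < n \<and> x k = a})) = real n"
    using sum_count[of n x] by (metis of_nat_sum)
  thus ?thesis using assms
    by (simp add: PMFs_def empirical_def sum_divide_distrib[symmetric])
qed

lemma card_emp_types:
  shows "card (emp_types n :: ('a::finite \<Rightarrow> real) set) \<le> (n + 1) ^ CARD('a)"
    and "finite (emp_types n :: ('a::finite \<Rightarrow> real) set)"
proof -
  let ?C = "PiE (UNIV::'a set) (\<lambda>_. {0..n})"
  have sub: "emp_types n \<subseteq> (\<lambda>c. \<lambda>a. real (c a) / real n) ` ?C"
  proof
    fix f :: "'a \<Rightarrow> real" assume "f \<in> emp_types n"
    then obtain x where fx: "f = empirical x n" by (auto simp: emp_types_def)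
    have "card {k. k < n \<and> x k = a} \<le> n" for a
      using card_mono[of "{..<n}" "{k. k < n \<and> x k = a}"] by auto
    hence "(\<lambda>a. card {k. k < n \<and> x k = a}) \<in> ?C" by auto
    thus "f \<in> (\<lambda>c. \<lambda>a. real (c a) / real n) ` ?C"
      unfolding fx empirical_def by (intro image_eqI[where x="\<lambda>a. card {k. k < n \<and> x k = a}"]) auto
  qed
  have fin: "finite ?C" by (intro finite_PiE) auto
  show "finite (emp_types n :: ('a::finite \<Rightarrow> real) set)" using finite_subset[OF sub] fin by blast
  have "card (emp_types n :: ('a \<Rightarrow> real) set) \<le> card ((\<lambda>c. \<lambda>a. real (c a) / real n) ` ?C)"
    using sub fin by (intro card_mono) auto
  also have "\<dots> \<le> card ?C" using fin by (rule card_image_le)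
  also have "card ?C = (n + 1) ^ CARD('a)" by (simp add: card_PiE)
  finally show "card (emp_types n :: ('a::finite \<Rightarrow> real) set) \<le> (n + 1) ^ CARD('a)" .
qed

lemma type_bound:
  fixes f0 :: "'a::finite pmf" and n :: nat and g :: "'a \<Rightarrow> real"
  assumes n1: "1 \<le> n" and gT: "g \<in> emp_types n"
  shows "measure_pmf.prob (Pi_pmf {..<n} undefined (\<lambda>_. f0)) {x. empirical x n = g}
     \<le> (if (\<forall>a. pmf f0 a = 0 \<longrightarrow> g a = 0) then exp (-(real n * KLr g (pmf f0))) else 0)"
proof -
  obtain y where gy: "g = empirical y n" using gT by (auto simp: emp_types_def)
  define cy where "cy a = card {k. k < n \<and> y k = a}" for a
  define T where "T = {x. empirical x n = g}"
  let ?E = "PiE {..<n} (\<lambda>_. UNIV :: 'a set)"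
  have np: "0 < real n" using n1 by simp
  have gcy: "g a = real (cy a) / real n" for a by (simp add: gy empirical_def cy_def)
  have cnt: "card {k. k < n \<and> x k = a} = cy a" if "x \<in> T" for x a
  proof -
    have "real (card {k. k < n \<and> x k = a}) / real n = real (cy a) / real n"
    proof -
      have "empirical x n a = g a" using that by (simp add: T_def)
      thus ?thesis using gcy[of a] by (simp add: empirical_def)
    qed
    hence "real (card {k. k < n \<and> x k = a}) = real (cy a)" using np by (simp add: divide_cancel_right)
    thus ?thesis by simp
  qed
  have probW: "measure_pmf.prob (Pi_pmf {..<n} undefined (\<lambda>_. p)) T
      = real (card (T \<inter> ?E)) * (\<Prod>a\<in>UNIV. pmf p a ^ cy a)" for p :: "'a pmf"
  proof -
    have "measure_pmf.prob (Pi_pmf {..<n} undefined (\<lambda>_. p)) T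
        = (\<Sum>x\<in>T \<inter> ?E. \<Prod>k<n. pmf p (x k))" by (rule prob_Pi_sum)
    also have "\<dots> = (\<Sum>x\<in>T \<inter> ?E. \<Prod>a\<in>UNIV. pmf p a ^ cy a)"
      by (intro sum.cong refl) (simp add: prod_count cnt)
    finally show ?thesis by simp
  qed
  show ?thesis
  proof (cases "\<forall>a. pmf f0 a = 0 \<longrightarrow> g a = 0")
    case False
    then obtain a where a: "pmf f0 a = 0" "g a \<noteq> 0" by auto
    hence "cy a \<noteq> 0" using gcy[of a] by auto
    hence "(\<Prod>a\<in>UNIV. pmf f0 a ^ cy a) = 0" using a by (intro prod_zero) auto
    hence "measure_pmf.prob (Pi_pmf {..<n} undefined (\<lambda>_. f0)) T = 0"
      using probW[of f0] by (metis mult_zero_right)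
    thus ?thesis using False by (simp add: T_def)
  next
    case True
    have gP: "g \<in> PMFs" using gy empirical_PMF[OF n1] by simp
    have g0: "\<And>a. 0 \<le> g a" and g1: "(\<Sum>a\<in>UNIV. g a) = 1" using gP by (auto simp: PMFs_def)
    have int1: "(\<integral>\<^sup>+x. ennreal (g x) \<partial>count_space UNIV) = 1"
      using g0 g1 by (simp add: nn_integral_count_space_finite)
    define G where "G = embed_pmf g"
    have pG: "pmf G a = g a" for a unfolding G_def using g0 int1 by (rule pmf_embed_pmf)
    have "measure_pmf.prob (Pi_pmf {..<n} undefined (\<lambda>_. G)) T \<le> 1" by simp
    hence le1: "real (card (T \<inter> ?E)) * (\<Prod>a\<in>UNIV. g a ^ cy a) \<le> 1"
      using probW[of G] by (simp add: pG)
    have fac: "pmf f0 a ^ cy a = g a ^ cy a * exp (-(real n * (g a * ln (g a / pmf f0 a))))" for a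
    proof (cases "g a = 0")
      case True
      hence "cy a = 0" using gcy[of a] np by simp
      thus ?thesis using True by simp
    next
      case False
      hence gp: "0 < g a" using g0[of a] by (simp add: less_le)
      have "pmf f0 a \<noteq> 0" using True False by auto
      hence pp: "0 < pmf f0 a" by (simp add: less_le)
      have rc: "real n * g a = real (cy a)" using gcy[of a] np by simp
      have "pmf f0 a ^ cy a = exp (real (cy a) * ln (pmf f0 a))"
        using pp by (simp add: exp_ln ln_realpow[symmetric])
      moreover have "g a ^ cy a = exp (real (cy a) * ln (g a))"
        using gp by (simp add: exp_ln ln_realpow[symmetric])
      moreover have "-(real n * (g a * ln (g a / pmf f0 a))) = real (cy a) * ln (pmf f0 a) - real (cy a) * ln (g a)"
        using gp pp rc[symmetric] by (simp add: ln_div algebra_simps)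
      ultimately show ?thesis by (simp add: exp_add[symmetric])
    qed
    have "(\<Prod>a\<in>UNIV. pmf f0 a ^ cy a) = (\<Prod>a\<in>UNIV. g a ^ cy a) * exp (-(real n * KLr g (pmf f0)))"
      by (simp add: fac prod.distrib KLr_def exp_sum sum_distrib_left sum_negf[symmetric])
    hence "measure_pmf.prob (Pi_pmf {..<n} undefined (\<lambda>_. f0)) T
        = (real (card (T \<inter> ?E)) * (\<Prod>a\<in>UNIV. g a ^ cy a)) * exp (-(real n * KLr g (pmf f0)))"
      using probW[of f0] by simp
    also have "\<dots> \<le> exp (-(real n * KLr g (pmf f0)))"
      using le1 by (simp add: mult_left_le_one_le)
    finally show ?thesis using True by (simp add: T_def)
  qed
qed



theorem theorem1:
  fixes q :: "('a::finite \<Rightarrow> real) \<Rightarrow> real"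
    and f0 :: "'a pmf"
    and L qlow cS cD :: real
    and P1 :: "('a \<Rightarrow> real) set"
    and fs :: "'a \<Rightarrow> real"
    and n :: nat
  assumes qc: "quasiconcave_on PMFs q"
    and lip: "\<forall>f\<in>PMFs. \<forall>g\<in>PMFs. \<bar>q f - q g\<bar> \<le> L * l1dist f g"
    and q0: "q (pmf f0) < 0" and qlow: "0 < qlow"
    and P1ne: "P1 \<noteq> {}" and P1sub: "P1 \<subseteq> {f\<in>PMFs. qlow \<le> q f}"
    and n1: "1 \<le> n"
    and cS: "cS < (SUP f\<in>PMFs. q f)"
    and cD: "0 \<le> cD"
    and fstar: "is_IProj q cS (pmf f0) fs"
  shows "measure_pmf.prob (Pi_pmf {..<n} undefined (\<lambda>_. f0))
            {x. empirical x n \<in> Gamma1 q cS cD fs n}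
         \<le> (real n + 1) ^ CARD('a) *
            exp (- (real n * (cD + (max (cS - q (pmf f0)) 0)\<^sup>2 / (2 * L\<^sup>2))))"
proof -
  define p0 where "p0 = pmf f0"
  define \<beta> where "\<beta> = cD + (max (cS - q (pmf f0)) 0)\<^sup>2 / (2 * L\<^sup>2)"
  define \<Gamma> where "\<Gamma> = Gamma1 q cS cD fs n"
  let ?M = "Pi_pmf {..<n} undefined (\<lambda>_. f0)"
  have p0P: "p0 \<in> PMFs" unfolding p0_def PMFs_def
    by (auto intro!: sum_pmf_eq_1)
  have fsP: "fs \<in> PMFs" and fsq: "cS \<le> q fs"
    and fsmin: "\<And>f. f \<in> PMFs \<Longrightarrow> cS \<le> q f \<Longrightarrow> KL fs p0 \<le> KL f p0"
    using fstar by (auto simp: is_IProj_def p0_def)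
  have fs0: "\<And>a. 0 \<le> fs a" and fs1: "(\<Sum>a\<in>UNIV. fs a) = 1" using fsP by (auto simp: PMFs_def)
  have per: "measure_pmf.prob ?M {x. empirical x n = g} \<le> exp (-(real n * \<beta>))" if gG: "g \<in> \<Gamma>" for g
  proof -
    have gT: "g \<in> emp_types n" and gq: "cS \<le> q g" and gD: "ereal cD \<le> KL g fs"
      using gG by (auto simp: \<Gamma>_def Gamma1_def)
    have gP: "g \<in> PMFs" using gT n1 empirical_PMF by (auto simp: emp_types_def)
    have g0: "\<And>a. 0 \<le> g a" and g1: "(\<Sum>a\<in>UNIV. g a) = 1" using gP by (auto simp: PMFs_def)
    note tb = type_bound[OF n1 gT, of f0]
    show ?thesis
    proof (cases "\<forall>a. p0 a = 0 \<longrightarrow> g a = 0")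
      case False
      hence "\<not> (\<forall>a. pmf f0 a = 0 \<longrightarrow> g a = 0)" by (simp add: p0_def)
      hence "measure_pmf.prob ?M {x. empirical x n = g} \<le> 0" using tb by (simp only: if_not_P if_False)
      also have "0 \<le> exp (-(real n * \<beta>))" by simp
      finally show ?thesis .
    next
      case True
      have KLg: "KL g p0 = ereal (KLr g p0)" using True by (intro KL_fin) auto
      have le: "KL fs p0 \<le> KL g p0" using fsmin[OF gP gq] .
      have sfs: "\<And>a. p0 a = 0 \<Longrightarrow> fs a = 0"
      proof (rule ccontr)
        fix a assume "p0 a = 0" "fs a \<noteq> 0"
        hence "KL fs p0 = \<infinity>" by (rule KL_inf)
        thus False using le KLg by simp
      qed
      have mini: "KLr fs p0 \<le> KLr (\<lambda>a. (1-t)*fs a + t*g a) p0" if t: "0 < t" "t \<le> 1" for t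
      proof -
        define h where "h = (\<lambda>a. (1-t)*fs a + t*g a)"
        have hP: "h \<in> PMFs"
          using fs0 g0 fs1 g1 t by (auto simp: PMFs_def h_def sum.distrib sum_distrib_left[symmetric])
        have "min (q fs) (q g) \<le> q (\<lambda>a. (1-t) * fs a + (1 - (1-t)) * g a)"
          using qc fsP gP t unfolding quasiconcave_on_def
          by (elim ballE[of _ _ fs] ballE[of _ _ g] allE[of _ "1-t"]) auto
        hence hq: "cS \<le> q h" using fsq gq by (simp add: h_def)
        have "KL fs p0 \<le> KL h p0" using fsmin[OF hP hq] .
        moreover have "KL fs p0 = ereal (KLr fs p0)" using sfs by (intro KL_fin) auto
        moreover have "KL h p0 = ereal (KLr h p0)" using sfs True by (intro KL_fin) (auto simp: h_def)
        ultimately show ?thesis by (simp add: h_def)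
      qed
      have py: "(\<forall>a. fs a = 0 \<longrightarrow> g a = 0) \<and> KLr fs p0 + KLr g fs \<le> KLr g p0"
        using pythag[OF p0P fsP gP _ sfs mini] True by auto
      have "KL g fs = ereal (KLr g fs)" using py by (intro KL_fin) auto
      hence cDle: "cD \<le> KLr g fs" using gD by simp
      have pin: "(l1dist fs p0)^2 \<le> 2 * KLr fs p0" using pinsker[OF fsP p0P sfs] .
      have lp: "\<bar>q fs - q p0\<bar> \<le> L * l1dist fs p0" using lip fsP p0P by auto
      have mx: "(max (cS - q (pmf f0)) 0)\<^sup>2 / (2 * L\<^sup>2) \<le> KLr fs p0"
      proof (cases "cS \<le> q p0")
        case True
        hence "max (cS - q (pmf f0)) 0 = 0" by (simp add: p0_def)
        moreover have "0 \<le> KLr fs p0" using pin by (smt (verit) zero_le_power2)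
        ultimately show ?thesis by simp
      next
        case False
        hence m: "max (cS - q (pmf f0)) 0 = cS - q p0" by (simp add: p0_def)
        have pos: "0 < cS - q p0" using False by simp
        have a: "cS - q p0 \<le> L * l1dist fs p0" using lp fsq by linarith
        have l1n: "0 \<le> l1dist fs p0" by (simp add: l1dist_def sum_nonneg)
        have "(cS - q p0)^2 \<le> (L * l1dist fs p0)^2" using pos a by (intro power_mono) auto
        also have "\<dots> = L^2 * (l1dist fs p0)^2" by (simp add: power_mult_distrib)
        finally have b: "(cS - q p0)^2 \<le> L^2 * (l1dist fs p0)^2" .
        have "L \<noteq> 0" using pos a by auto
        hence L2: "0 < 2 * L^2" by simp
        have "(cS - q p0)^2 / (2 * L^2) \<le> L^2 * (l1dist fs p0)^2 / (2 * L^2)"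
          using b L2 by (intro divide_right_mono) auto
        also have "\<dots> = (l1dist fs p0)^2 / 2" using L2 by (simp add: field_simps)
        also have "\<dots> \<le> KLr fs p0" using pin by simp
        finally show ?thesis using m by simp
      qed
      have "\<beta> \<le> KLr g p0" using py cDle mx by (simp add: \<beta>_def)
      hence "exp (-(real n * KLr g p0)) \<le> exp (-(real n * \<beta>))"
        by (simp add: mult_left_mono)
      moreover have "measure_pmf.prob ?M {x. empirical x n = g} \<le> exp (-(real n * KLr g p0))"
        using tb True by (simp add: p0_def)
      ultimately show ?thesis by linarith
    qed
  qed
  have finE: "finite (emp_types n :: ('a \<Rightarrow> real) set)" by (rule card_emp_types(2))
  have GS: "\<Gamma> \<subseteq> emp_types n" by (auto simp: \<Gamma>_def Gamma1_def)
  have finG: "finite \<Gamma>" using finite_subset[OF GS finE] .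
  have "{x. empirical x n \<in> \<Gamma>} = (\<Union>g\<in>\<Gamma>. {x. empirical x n = g})" by auto
  hence "measure_pmf.prob ?M {x. empirical x n \<in> \<Gamma>}
       \<le> (\<Sum>g\<in>\<Gamma>. measure_pmf.prob ?M {x. empirical x n = g})"
    using measure_pmf.finite_measure_subadditive_finite[OF finG, of "\<lambda>g. {x. empirical x n = g}" ?M]
    by simp
  also have "\<dots> \<le> (\<Sum>g\<in>\<Gamma>. exp (-(real n * \<beta>)))" by (intro sum_mono per)
  also have "\<dots> = real (card \<Gamma>) * exp (-(real n * \<beta>))" by simp
  also have "\<dots> \<le> real ((n + 1) ^ CARD('a)) * exp (-(real n * \<beta>))"
  proof -
    have "card \<Gamma> \<le> card (emp_types n :: ('a \<Rightarrow> real) set)" using card_mono[OF finE GS] .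
    also have "\<dots> \<le> (n + 1) ^ CARD('a)" by (rule card_emp_types(1))
    finally have "real (card \<Gamma>) \<le> real ((n + 1) ^ CARD('a))" by (simp only: of_nat_le_iff)
    thus ?thesis by (intro mult_right_mono) auto
  qed
  finally show ?thesis by (simp add: \<Gamma>_def \<beta>_def add.commute)
qed


end
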